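(* For all integers $m,n\geq 2$, the grid $P_m\Box P_n$ has an independent $[1,2]$-set.
   Context: $P_k$ denotes the path on $k$ vertices and $P_m\Box P_n$ the Cartesian product of two paths (the $m\times n$ grid graph). A set $S$ of vertices of a graph $G$ is independent if no two vertices of $S$ are adjacent, and dominating if every vertex not in $S$ has at least one neighbor in $S$. An independent $[1,2]$-set of $G$ is an independent dominating set $S$ such that every vertex $v\in V(G)\setminus S$ has at least one and at most two neighbors in $S$. *)

theory Defs
  imports Main
begin

definition independent_set :: "'a set \<Rightarrow> ('a \<Rightarrow> 'a \<Rightarrow> bool) \<Rightarrow> 'a set \<Rightarrow> bool" where
  "independent_set V E S \<longleftrightarrow> S \<subseteq> V \<and> (\<forall>u\<in>S. \<forall>v\<in>S. \<not> E u v)"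

definition dominating_set :: "'a set \<Rightarrow> ('a \<Rightarrow> 'a \<Rightarrow> bool) \<Rightarrow> 'a set \<Rightarrow> bool" where
  "dominating_set V E S \<longleftrightarrow> S \<subseteq> V \<and> (\<forall>v\<in>V - S. \<exists>u\<in>S. E v u)"

definition independent_12_set :: "'a set \<Rightarrow> ('a \<Rightarrow> 'a \<Rightarrow> bool) \<Rightarrow> 'a set \<Rightarrow> bool" where
  "independent_12_set V E S \<longleftrightarrow> independent_set V E S \<and> dominating_set V E S \<and>
     (\<forall>v\<in>V - S. 1 \<le> card {u\<in>S. E v u} \<and> card {u\<in>S. E v u} \<le> 2)"

definition path_vertices :: "nat \<Rightarrow> nat set" where
  "path_vertices k = {0..<k}"

definition path_adj :: "nat \<Rightarrow> nat \<Rightarrow> bool" where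
  "path_adj i j \<longleftrightarrow> i = j + 1 \<or> j = i + 1"

definition cart_vertices :: "'a set \<Rightarrow> 'b set \<Rightarrow> ('a \<times> 'b) set" where
  "cart_vertices V1 V2 = V1 \<times> V2"

definition cart_adj :: "('a \<Rightarrow> 'a \<Rightarrow> bool) \<Rightarrow> ('b \<Rightarrow> 'b \<Rightarrow> bool) \<Rightarrow> 'a \<times> 'b \<Rightarrow> 'a \<times> 'b \<Rightarrow> bool" where
  "cart_adj E1 E2 x y \<longleftrightarrow> (fst x = fst y \<and> E2 (snd x) (snd y)) \<or> (snd x = snd y \<and> E1 (fst x) (fst y))"

definition grid_vertices :: "nat \<Rightarrow> nat \<Rightarrow> (nat \<times> nat) set" where
  "grid_vertices m n = cart_vertices (path_vertices m) (path_vertices n)"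

definition grid_adj :: "nat \<times> nat \<Rightarrow> nat \<times> nat \<Rightarrow> bool" where
  "grid_adj = cart_adj path_adj path_adj"

end

theory Submission
  imports Defs
begin

definition ind :: "bool \<Rightarrow> nat" where "ind b = (if b then 1 else 0)"

definition ctx :: "(nat \<Rightarrow> nat \<Rightarrow> nat) \<Rightarrow> nat \<Rightarrow> nat \<Rightarrow> nat option \<times> nat \<times> nat option" where
  "ctx w m i = (if i = 0 then None else Some (w m (i - 1)), w m i, if i + 1 < m then Some (w m (i + 1)) else None)"

definition optT :: "(nat \<Rightarrow> nat \<Rightarrow> bool) \<Rightarrow> nat option \<Rightarrow> nat \<Rightarrow> bool" where
  "optT T a b = (case a of None \<Rightarrow> False | Some x \<Rightarrow> T x b)"

fun okc :: "(nat \<Rightarrow> nat \<Rightarrow> bool) \<Rightarrow> nat option \<times> nat \<times> nat option \<Rightarrow> nat option \<times> nat \<times> nat option \<Rightarrow> bool" where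
  "okc T (a1,b1,c1) (a2,b2,c2) = (let cnt = ind (optT T a1 b2) + ind (optT T c1 b2)
       + ind (optT (\<lambda>x y. T y x) a2 b1) + ind (optT (\<lambda>x y. T y x) c2 b1) in
     if T b1 b2 then cnt = 0 else 1 \<le> cnt \<and> cnt \<le> 2)"

lemma grid_adj_pair: "grid_adj (i,j) (a,b) \<longleftrightarrow> (i = a \<and> (j = b+1 \<or> b = j+1)) \<or> (j = b \<and> (i = a+1 \<or> a = i+1))"
  by (auto simp: grid_adj_def cart_adj_def path_adj_def)

lemma nb_iff: fixes i j m n a b :: nat assumes "i < m" "j < n" shows "(a < m \<and> b < (n::nat) \<and> s a b \<and> ((i = a \<and> (j = b+1 \<or> b = j+1)) \<or> (j = b \<and> (i = a+1 \<or> a = i+1)))) \<longleftrightarrow>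
   ((0 < i \<and> s (i-1) j \<and> a = i-1 \<and> b = j) \<or> (i+1 < m \<and> s (i+1) j \<and> a = i+1 \<and> b = j) \<or>
    (0 < j \<and> s i (j-1) \<and> a = i \<and> b = j-1) \<or> (j+1 < n \<and> s i (j+1) \<and> a = i \<and> b = j+1))"
proof
  assume "a < m \<and> b < (n::nat) \<and> s a b \<and> ((i = a \<and> (j = b+1 \<or> b = j+1)) \<or> (j = b \<and> (i = a+1 \<or> a = i+1)))"
  then show "((0 < i \<and> s (i-1) j \<and> a = i-1 \<and> b = j) \<or> (i+1 < m \<and> s (i+1) j \<and> a = i+1 \<and> b = j) \<or>
    (0 < j \<and> s i (j-1) \<and> a = i \<and> b = j-1) \<or> (j+1 < n \<and> s i (j+1) \<and> a = i \<and> b = j+1))"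
    by (elim conjE disjE) auto
next
  assume "((0 < i \<and> s (i-1) j \<and> a = i-1 \<and> b = j) \<or> (i+1 < m \<and> s (i+1) j \<and> a = i+1 \<and> b = j) \<or>
    (0 < j \<and> s i (j-1) \<and> a = i \<and> b = j-1) \<or> (j+1 < n \<and> s i (j+1) \<and> a = i \<and> b = j+1))"
  then show "(a < m \<and> b < (n::nat) \<and> s a b \<and> ((i = a \<and> (j = b+1 \<or> b = j+1)) \<or> (j = b \<and> (i = a+1 \<or> a = i+1))))"
    using assms by (elim conjE disjE) auto
qed

lemma card_nb:
  fixes s :: "nat \<Rightarrow> nat \<Rightarrow> bool" and m n :: nat
  defines "S \<equiv> {(a,b). a < m \<and> b < n \<and> s a b}"
  assumes "i < m" "j < n"
  shows "card {u\<in>S. grid_adj (i,j) u} =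
     ind (0 < i \<and> s (i-1) j) + ind (i+1 < m \<and> s (i+1) j) + ind (0 < j \<and> s i (j-1)) + ind (j+1 < n \<and> s i (j+1))"
proof -
  define A1 where "A1 = (if 0 < i \<and> s (i-1) j then {(i-1,j)} else {})"
  define A2 where "A2 = (if i+1 < m \<and> s (i+1) j then {(i+1,j)} else {})"
  define A3 where "A3 = (if 0 < j \<and> s i (j-1) then {(i,j-1)} else {})"
  define A4 where "A4 = (if j+1 < n \<and> s i (j+1) then {(i,j+1)} else {})"
  have eq: "{u\<in>S. grid_adj (i,j) u} = A1 \<union> A2 \<union> A3 \<union> A4"
  proof (rule set_eqI)
    fix u :: "nat \<times> nat"
    obtain a b where u: "u = (a,b)" by (cases u)
    have L: "(a,b) \<in> {u\<in>S. grid_adj (i,j) u} \<longleftrightarrow> (a < m \<and> b < (n::nat) \<and> s a b \<and> ((i = a \<and> (j = b+1 \<or> b = j+1)) \<or> (j = b \<and> (i = a+1 \<or> a = i+1))))"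
      by (simp add: S_def grid_adj_pair)
    have R: "(a,b) \<in> A1 \<union> A2 \<union> A3 \<union> A4 \<longleftrightarrow> ((0 < i \<and> s (i-1) j \<and> a = i-1 \<and> b = j) \<or> (i+1 < m \<and> s (i+1) j \<and> a = i+1 \<and> b = j) \<or>
    (0 < j \<and> s i (j-1) \<and> a = i \<and> b = j-1) \<or> (j+1 < n \<and> s i (j+1) \<and> a = i \<and> b = j+1))"
      unfolding A1_def A2_def A3_def A4_def by auto
    show "u \<in> {u\<in>S. grid_adj (i,j) u} \<longleftrightarrow> u \<in> A1 \<union> A2 \<union> A3 \<union> A4"
      unfolding u L R by (rule nb_iff[OF assms(2,3)])
  qed
  have f: "finite A1" "finite A2" "finite A3" "finite A4"
    by (simp_all add: A1_def A2_def A3_def A4_def)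
  have d1: "A1 \<inter> A2 = {}" by (auto simp: A1_def A2_def)
  have d2: "(A1 \<union> A2) \<inter> A3 = {}" by (auto simp: A1_def A2_def A3_def)
  have d3: "(A1 \<union> A2 \<union> A3) \<inter> A4 = {}" by (auto simp: A1_def A2_def A3_def A4_def)
  have c: "card (A1 \<union> A2 \<union> A3 \<union> A4) = card A1 + card A2 + card A3 + card A4"
    using f d1 d2 d3 by (simp add: card_Un_disjoint)
  show ?thesis unfolding eq c by (simp add: A1_def A2_def A3_def A4_def ind_def)
qed


lemma local_count:
  fixes T :: "nat \<Rightarrow> nat \<Rightarrow> bool" and wr wc :: "nat \<Rightarrow> nat \<Rightarrow> nat" and m n :: nat
  defines "S \<equiv> {(a,b). a < m \<and> b < n \<and> T (wr m a) (wc n b)}"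
  assumes "i < m" "j < n" "okc T (ctx wr m i) (ctx wc n j)"
  shows "if T (wr m i) (wc n j) then card {u\<in>S. grid_adj (i,j) u} = 0
         else 1 \<le> card {u\<in>S. grid_adj (i,j) u} \<and> card {u\<in>S. grid_adj (i,j) u} \<le> 2"
proof -
  have c: "card {u\<in>S. grid_adj (i,j) u} =
     ind (0 < i \<and> T (wr m (i-1)) (wc n j)) + ind (i+1 < m \<and> T (wr m (i+1)) (wc n j))
     + ind (0 < j \<and> T (wr m i) (wc n (j-1))) + ind (j+1 < n \<and> T (wr m i) (wc n (j+1)))"
    unfolding S_def by (rule card_nb[OF assms(2,3)])
  have e: "ind (optT T (if i = 0 then None else Some (wr m (i - 1))) (wc n j)) = ind (0 < i \<and> T (wr m (i-1)) (wc n j))"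
          "ind (optT T (if i + 1 < m then Some (wr m (i + 1)) else None) (wc n j)) = ind (i+1 < m \<and> T (wr m (i+1)) (wc n j))"
          "ind (optT (\<lambda>x y. T y x) (if j = 0 then None else Some (wc n (j - 1))) (wr m i)) = ind (0 < j \<and> T (wr m i) (wc n (j-1)))"
          "ind (optT (\<lambda>x y. T y x) (if j + 1 < n then Some (wc n (j + 1)) else None) (wr m i)) = ind (j+1 < n \<and> T (wr m i) (wc n (j+1)))"
    by (auto simp: optT_def)
  show ?thesis using assms(4) unfolding c ctx_def okc.simps Let_def e .
qed

lemma generic:
  fixes T :: "nat \<Rightarrow> nat \<Rightarrow> bool" and wr wc :: "nat \<Rightarrow> nat \<Rightarrow> nat" and m n :: nat
  assumes r: "\<And>i. i < m \<Longrightarrow> ctx wr m i \<in> Cr"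
    and c: "\<And>j. j < n \<Longrightarrow> ctx wc n j \<in> Cc"
    and ok: "\<forall>x\<in>Cr. \<forall>y\<in>Cc. okc T x y"
  shows "independent_12_set (grid_vertices m n) grid_adj {(a,b). a < m \<and> b < n \<and> T (wr m a) (wc n b)}"
proof -
  define S where "S = {(a,b). a < m \<and> b < n \<and> T (wr m a) (wc n b)}"
  have V: "grid_vertices m n = {(a,b). a < m \<and> b < n}"
    by (auto simp: grid_vertices_def cart_vertices_def path_vertices_def)
  have fin: "finite S"
  proof -
    have "S \<subseteq> {..<m} \<times> {..<n}" by (auto simp: S_def)
    then show ?thesis by (rule finite_subset) simp
  qed
  have lc: "if T (wr m i) (wc n j) then card {u\<in>S. grid_adj (i,j) u} = 0
         else 1 \<le> card {u\<in>S. grid_adj (i,j) u} \<and> card {u\<in>S. grid_adj (i,j) u} \<le> 2"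
    if "i < m" "j < n" for i j
    unfolding S_def using that ok r[OF that(1)] c[OF that(2)] by (intro local_count) auto
  have SV: "S \<subseteq> grid_vertices m n" by (auto simp: S_def V)
  have ind: "independent_set (grid_vertices m n) grid_adj S"
    unfolding independent_set_def
  proof (intro conjI SV ballI)
    fix u v assume u: "u \<in> S" and v: "v \<in> S"
    obtain i j where uij: "u = (i,j)" by (cases u)
    from u uij have ij: "i < m" "j < n" "T (wr m i) (wc n j)" by (auto simp: S_def)
    from lc[OF ij(1,2)] ij(3) have "card {w\<in>S. grid_adj (i,j) w} = 0" by simp
    moreover have "finite {w\<in>S. grid_adj (i,j) w}" using fin by simp
    ultimately have "{w\<in>S. grid_adj (i,j) w} = {}" by simp
    with v show "\<not> grid_adj u v" unfolding uij by blast
  qed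
  have cnt: "1 \<le> card {u\<in>S. grid_adj v u} \<and> card {u\<in>S. grid_adj v u} \<le> 2"
    if "v \<in> grid_vertices m n - S" for v
  proof -
    obtain i j where vij: "v = (i,j)" by (cases v)
    from that vij have ij: "i < m" "j < n" "\<not> T (wr m i) (wc n j)" by (auto simp: S_def V)
    from lc[OF ij(1,2)] ij(3) show ?thesis unfolding vij by simp
  qed
  have dom: "dominating_set (grid_vertices m n) grid_adj S"
    unfolding dominating_set_def
  proof (intro conjI SV ballI)
    fix v assume v: "v \<in> grid_vertices m n - S"
    from cnt[OF v] have "card {u\<in>S. grid_adj v u} \<noteq> 0" by simp
    then have "{u\<in>S. grid_adj v u} \<noteq> {}" by (metis card.empty)
    then show "\<exists>u\<in>S. grid_adj v u" by blast
  qed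
  show ?thesis unfolding S_def[symmetric] independent_12_set_def using ind dom cnt by blast
qed


lemma mod4_cases:
  fixes i :: nat
  shows "(i mod 4 = 0 \<and> (i+1) mod 4 = 1 \<and> (0 < i \<longrightarrow> (i-1) mod 4 = 3)) \<or>
         (i mod 4 = 1 \<and> (i+1) mod 4 = 2 \<and> (i-1) mod 4 = 0 \<and> 0 < i) \<or>
         (i mod 4 = 2 \<and> (i+1) mod 4 = 3 \<and> (i-1) mod 4 = 1 \<and> 0 < i) \<or>
         (i mod 4 = 3 \<and> (i+1) mod 4 = 0 \<and> (i-1) mod 4 = 2 \<and> 0 < i)"
proof (cases i)
  case 0 then show ?thesis by simp
next
  case (Suc k)
  have "k mod 4 < 4" by simp
  then have "k mod 4 = 0 \<or> k mod 4 = 1 \<or> k mod 4 = 2 \<or> k mod 4 = 3" by linarith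
  then show ?thesis unfolding Suc by (elim disjE) (simp_all add: mod_Suc)
qed

definition base4 :: "(nat option \<times> nat \<times> nat option) set" where
  "base4 = {(None,0,Some 1),(Some 3,0,Some 1),(Some 0,1,Some 2),(Some 1,2,Some 3),(Some 2,3,Some 0)}"

lemma base4_mem:
  fixes i :: nat
  shows "(if i = 0 then None else Some ((i-1) mod 4), i mod 4, Some ((i+1) mod 4)) \<in> base4"
  using mod4_cases[of i] unfolding base4_def by (elim disjE conjE) auto

lemma prefix_ctx:
  assumes "\<And>x. x < p \<Longrightarrow> w m x = x mod 4" "i + 1 < p" "p \<le> m"
  shows "ctx w m i = (if i = 0 then None else Some ((i-1) mod 4), i mod 4, Some ((i+1) mod 4))"
  using assms by (auto simp: ctx_def)

lemma prefix_ctx_mem: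
  assumes "\<And>x. x < p \<Longrightarrow> w m x = x mod 4" "i + 1 < p" "p \<le> m"
  shows "ctx w m i \<in> base4"
proof -
  have e: "ctx w m i = (if i = 0 then None else Some ((i-1) mod 4), i mod 4, Some ((i+1) mod 4))"
    by (rule prefix_ctx[of p w m i]) (use assms in auto)
  show ?thesis unfolding e by (rule base4_mem)
qed

definition w4 :: "nat \<Rightarrow> nat \<Rightarrow> nat" where "w4 m i = i mod 4"
definition w2 :: "nat \<Rightarrow> nat \<Rightarrow> nat" where "w2 m i = i mod 2"
definition T1 :: "nat \<Rightarrow> nat \<Rightarrow> bool" where "T1 a b \<longleftrightarrow> (a = 0 \<and> b = 0) \<or> (a = 2 \<and> b = 1)"
definition T2 :: "nat \<Rightarrow> nat \<Rightarrow> bool" where "T2 a b \<longleftrightarrow> T1 b a"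

definition Codd :: "(nat option \<times> nat \<times> nat option) set" where
  "Codd = base4 \<union> {(Some 3,0,None),(Some 1,2,None)}"
definition C2 :: "(nat option \<times> nat \<times> nat option) set" where
  "C2 = {(None,0,Some 1),(Some 0,1,None),(Some 1,0,None),(Some 0,1,Some 0),(Some 1,0,Some 1)}"

lemma even_mod4: "even (i::nat) \<Longrightarrow> i mod 4 = 0 \<or> i mod 4 = 2"
proof -
  assume e: "even i"
  have "i mod 4 mod 2 = i mod 2" by (simp add: mod_mod_cancel)
  then have "i mod 4 mod 2 = 0" using e by simp
  then show ?thesis using mod4_cases[of i] by auto
qed

lemma w4_ctx:
  assumes "odd m" "m \<ge> 2" "i < m"
  shows "ctx w4 m i \<in> Codd"
proof (cases "i + 1 < m")
  case True
  have "ctx w4 m i \<in> base4" by (rule prefix_ctx_mem[of m]) (use True in \<open>auto simp: w4_def\<close>)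
  then show ?thesis by (simp add: Codd_def)
next
  case False
  then have im: "i + 1 = m" using assms by simp
  have ev: "even i" using assms im by (metis even_add odd_one)
  have ip: "0 < i" using im assms by simp
  have c: "ctx w4 m i = (Some ((i-1) mod 4), i mod 4, None)" using im ip by (simp add: ctx_def w4_def)
  show ?thesis using even_mod4[OF ev] mod4_cases[of i] ip unfolding c Codd_def by auto
qed

lemma w2_ctx:
  assumes "m \<ge> 2" "i < m"
  shows "ctx w2 m i \<in> C2"
proof -
  have "i mod 2 = 0 \<or> i mod 2 = 1" by arith
  moreover have "0 < i \<Longrightarrow> (i - 1) mod 2 = 1 - i mod 2" by (cases i) (auto simp: mod_Suc)
  moreover have "(i + 1) mod 2 = 1 - i mod 2" by (auto simp: mod_Suc)
  ultimately show ?thesis using assms unfolding ctx_def w2_def C2_def by (cases "i = 0") auto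
qed

lemma ok_odd: "\<forall>x\<in>Codd. \<forall>y\<in>C2. okc T1 x y"
  by (simp add: Codd_def base4_def C2_def T1_def ind_def optT_def)

lemma ok_odd2: "\<forall>x\<in>C2. \<forall>y\<in>Codd. okc T2 x y"
  by (simp add: Codd_def base4_def C2_def T1_def T2_def ind_def optT_def)


definition we :: "nat \<Rightarrow> nat \<Rightarrow> nat" where
  "we m i = (if 4 dvd m then (if i < m - 4 then i mod 4 else [0,4,5,6] ! (i - (m - 4)))
             else (if i < m - 2 then i mod 4 else [7,8] ! (i - (m - 2))))"

definition Te :: "nat \<Rightarrow> nat \<Rightarrow> bool" where
  "Te a b \<longleftrightarrow> (a,b) \<in> {(0,2),(0,5),(0,7),(1,0),(2,3),(2,6),(2,8),(3,1),(3,4),(4,0),(4,8),(5,3),(5,6),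
     (6,1),(6,4),(6,7),(7,0),(7,6),(7,7),(8,2),(8,5),(8,8)}"

definition Ceven :: "(nat option \<times> nat \<times> nat option) set" where
  "Ceven = base4 \<union> {(Some 0,4,Some 5),(Some 2,3,Some 7),(Some 3,0,Some 4),(Some 3,7,Some 8),(Some 4,5,Some 6),
     (Some 5,6,None),(Some 7,8,None),(None,0,Some 4),(None,7,Some 8)}"

lemma ok_even: "\<forall>x\<in>Ceven. \<forall>y\<in>Ceven. okc Te x y"
  by (simp add: Ceven_def base4_def Te_def ind_def optT_def)

lemma dvd4_prev: "4 dvd (p::nat) \<Longrightarrow> 0 < p \<Longrightarrow> (p - 1) mod 4 = 3 \<and> (p - 2) mod 4 = 2"
proof -
  assume "4 dvd p" "0 < p"
  from \<open>4 dvd p\<close> obtain k0 where k0: "p = 4 * k0" by (rule dvdE)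
  with \<open>0 < p\<close> obtain k where k: "p = 4 * Suc k" by (cases k0) auto
  then have e: "p - 1 = 3 + k * 4" "p - 2 = 2 + k * 4" by simp_all
  have "(3 + k * 4) mod 4 = 3" "(2 + k * 4) mod 4 = 2" by (simp_all add: mod_Suc)
  then show ?thesis unfolding e by simp
qed

lemma we_ctx:
  assumes "even m" "m \<ge> 2" "i < m"
  shows "ctx we m i \<in> Ceven"
proof (cases "4 dvd m")
  case True
  define p where "p = m - 4"
  have m4: "m \<ge> 4"
  proof -
    obtain k where k: "m = 4 * k" using True by (rule dvdE)
    then have "k \<noteq> 0" using assms(2) by (cases k) auto
    then show ?thesis using k by simp
  qed
  have mp: "m = p + 4" using m4 p_def by simp
  have p4: "4 dvd p" using True m4 unfolding p_def by (simp add: dvd_diff_nat)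
  have pre: "\<And>x. x < p \<Longrightarrow> we m x = x mod 4" using True by (simp add: we_def p_def)
  have w0: "we m p = 0" "we m (p+1) = 4" "we m (p+2) = 5" "we m (p+3) = 6"
    using True unfolding we_def mp by simp_all
  have wprev: "0 < p \<Longrightarrow> we m (p - 1) = 3 \<and> we m (p - 2) = 2"
    using pre[of "p - 1"] pre[of "p - 2"] dvd4_prev[OF p4] by simp
  have "i + 1 < p \<or> (0 < p \<and> i + 1 = p) \<or> i = p \<or> i = p + 1 \<or> i = p + 2 \<or> i = p + 3"
    using assms(3) mp by arith
  then show ?thesis
  proof (elim disjE conjE)
    assume h: "i + 1 < p"
    have "ctx we m i \<in> base4"
      by (rule prefix_ctx_mem[of p]) (use pre h mp in auto)
    then show ?thesis by (simp add: Ceven_def)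
  next
    assume h: "0 < p" "i + 1 = p"
    have i1: "i = p - 1" "i - 1 = p - 2" "i + 1 = p" using h by auto
    have c1: "we m (i - 1) = 2" using wprev[OF h(1)] i1(2) by simp
    have im3: "i mod 4 = 3" using dvd4_prev[OF p4 h(1)] i1(1) by simp
    have c0: "0 < i" using im3 by (cases i) auto
    have c2: "we m i = 3" using pre[of i] h im3 by simp
    have c3: "we m (i + 1) = 0" using w0 i1(3) by simp
    have "ctx we m i = (Some 2, 3, Some 0)"
      unfolding ctx_def using c0 c1 c2 c3 h mp by simp
    then show ?thesis by (simp add: Ceven_def base4_def)
  next
    assume h: "i = p"
    have "ctx we m i = (if p = 0 then None else Some 3, 0, Some 4)"
      unfolding ctx_def h using wprev w0 mp by simp
    then show ?thesis by (simp add: Ceven_def base4_def)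
  next
    assume h: "i = p + 1"
    have "ctx we m i = (Some 0, 4, Some 5)"
      unfolding ctx_def h using w0 mp by simp
    then show ?thesis by (simp add: Ceven_def base4_def)
  next
    assume h: "i = p + 2"
    have e: "p + 2 - 1 = p + 1" "p + 2 + 1 = p + 3" by simp_all
    have "ctx we m i = (Some 4, 5, Some 6)"
      unfolding ctx_def h e using w0 mp by simp
    then show ?thesis by (simp add: Ceven_def base4_def)
  next
    assume h: "i = p + 3"
    have e: "p + 3 - 1 = p + 2" by simp_all
    have "ctx we m i = (Some 5, 6, None)"
      unfolding ctx_def h e using w0 mp by simp
    then show ?thesis by (simp add: Ceven_def base4_def)
  qed
next
  case False
  define p where "p = m - 2"
  have m2: "m mod 4 = 2" using False assms(1) even_mod4[of m] by auto
  have mp: "m = p + 2" using assms(2) p_def by simp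
  have pm: "p = m - m mod 4" using m2 unfolding p_def by simp
  have p4: "4 dvd p" unfolding pm by (rule dvd_minus_mod)
  have pre: "\<And>x. x < p \<Longrightarrow> we m x = x mod 4" using False by (simp add: we_def p_def)
  have w0: "we m p = 7" "we m (p+1) = 8"
    using False unfolding we_def mp by simp_all
  have wprev: "0 < p \<Longrightarrow> we m (p - 1) = 3 \<and> we m (p - 2) = 2"
    using pre[of "p - 1"] pre[of "p - 2"] dvd4_prev[OF p4] by simp
  have "i + 1 < p \<or> (0 < p \<and> i + 1 = p) \<or> i = p \<or> i = p + 1"
    using assms(3) mp by arith
  then show ?thesis
  proof (elim disjE conjE)
    assume h: "i + 1 < p"
    have "ctx we m i \<in> base4"
      by (rule prefix_ctx_mem[of p]) (use pre h mp in auto)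
    then show ?thesis by (simp add: Ceven_def)
  next
    assume h: "0 < p" "i + 1 = p"
    have i1: "i = p - 1" "i - 1 = p - 2" "i + 1 = p" using h by auto
    have c1: "we m (i - 1) = 2" using wprev[OF h(1)] i1(2) by simp
    have im3: "i mod 4 = 3" using dvd4_prev[OF p4 h(1)] i1(1) by simp
    have c0: "0 < i" using im3 by (cases i) auto
    have c2: "we m i = 3" using pre[of i] h im3 by simp
    have c3: "we m (i + 1) = 7" using w0 i1(3) by simp
    have "ctx we m i = (Some 2, 3, Some 7)"
      unfolding ctx_def using c0 c1 c2 c3 h mp by simp
    then show ?thesis by (simp add: Ceven_def base4_def)
  next
    assume h: "i = p"
    have "ctx we m i = (if p = 0 then None else Some 3, 7, Some 8)"
      unfolding ctx_def h using wprev w0 mp by simp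
    then show ?thesis by (simp add: Ceven_def base4_def)
  next
    assume h: "i = p + 1"
    have "ctx we m i = (Some 7, 8, None)"
      unfolding ctx_def h using w0 mp by simp
    then show ?thesis by (simp add: Ceven_def base4_def)
  qed
qed

theorem mainTheorem2:
  fixes m n :: nat
  assumes "m \<ge> 2" and "n \<ge> 2"
  shows "\<exists>S. independent_12_set (grid_vertices m n) grid_adj S"
proof (cases "odd m")
  case True
  show ?thesis
    by (rule exI, rule generic[OF w4_ctx[OF True assms(1)] w2_ctx[OF assms(2)] ok_odd])
next
  case em: False
  show ?thesis
  proof (cases "odd n")
    case True
    show ?thesis
      by (rule exI, rule generic[OF w2_ctx[OF assms(1)] w4_ctx[OF True assms(2)] ok_odd2])
  next
    case False
    show ?thesis
      by (rule exI, rule generic[OF we_ctx[of m] we_ctx[of n] ok_even]) (use False em assms in simp_all)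
  qed
qed

end
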